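(* Two elements $\tau=(w,z)$ and $\tau'=(w',z')$ of $\mathcal K^J$ lie in the same $W$-orbit if and only if $z$ and $z'$ lie in the same $W_J$-conjugacy class in $\mathscr I_J$.
   Context: Let $(W,S)$ be a finite Coxeter system with length function $\ell$ and reflections $T=\{wsw^{-1}:w\in W,s\in S\}$. Let $\mathrm{Aut}(W,S)$ be the automorphisms $\varphi$ of $W$ with $\varphi(S)=S$, and $W^+=W\rtimes\mathrm{Aut}(W,S)$ the group of pairs $(w,\varphi)$ with $(v,\alpha)(w,\beta)=(v\,\alpha(w),\alpha\beta)$; set $\ell(w,\varphi)=\ell(w)$ and identify $w$ with $(w,1)$. $z\in W^+$ is a perfect involution if $z^2=1$ and $(zt)^4=1$ for all $t\in T$. For $J\subseteq S$: $W_J=\langle J\rangle$; $\mathscr I_J$ is the set of perfect involutions of $(W_J)^+=W_J\rtimes\mathrm{Aut}(W_J,J)$, on which $W_J$ acts by conjugation $v:(y,\theta)\mapsto(v\,y\,\theta(v)^{-1},\theta)$. $W^J=\{w\in W:\ell(ws)>\ell(w)\ \forall s\in J\}$, $\mathcal K^J=W^J\times\mathscr I_J$. For $s\in S$ and $\tau=(w,z)\in\mathcal K^J$: $s\tau=(sw,z)$ if $sw\in W^J$; otherwise $t:=w^{-1}sw\in J$ and $s\tau=(w,tzt)$. This extends to an action of $W$ on $\mathcal K^J$. *)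

theory Defs
  imports "HOL-Algebra.Multiplicative_Group" "HOL-Algebra.Generated_Groups"
begin

definition word_eval :: "('w, 'b) monoid_scheme \<Rightarrow> 'w list \<Rightarrow> 'w" where
  "word_eval G u = foldr (\<lambda>x y. x \<otimes>\<^bsub>G\<^esub> y) u \<one>\<^bsub>G\<^esub>"

definition cox_m :: "('w, 'b) monoid_scheme \<Rightarrow> 'w \<Rightarrow> 'w \<Rightarrow> nat" where
  "cox_m G s t = group.ord G (s \<otimes>\<^bsub>G\<^esub> t)"

inductive cox_eq :: "('w, 'b) monoid_scheme \<Rightarrow> 'w set \<Rightarrow> 'w list \<Rightarrow> 'w list \<Rightarrow> bool"
  for G S where
  refl: "cox_eq G S u u"
| sym: "cox_eq G S u v \<Longrightarrow> cox_eq G S v u"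
| trans: "cox_eq G S u v \<Longrightarrow> cox_eq G S v x \<Longrightarrow> cox_eq G S u x"
| ctx: "cox_eq G S u v \<Longrightarrow> set a \<subseteq> S \<Longrightarrow> set b \<subseteq> S \<Longrightarrow> cox_eq G S (a @ u @ b) (a @ v @ b)"
| sq: "s \<in> S \<Longrightarrow> cox_eq G S [s, s] []"
| braid: "s \<in> S \<Longrightarrow> t \<in> S \<Longrightarrow> cox_eq G S (concat (replicate (cox_m G s t) [s, t])) []"

definition coxeter_system :: "('w, 'b) monoid_scheme \<Rightarrow> 'w set \<Rightarrow> bool" where
  "coxeter_system G S \<longleftrightarrow>
     group G \<and> S \<subseteq> carrier G \<and> generate G S = carrier G \<and>
     (\<forall>s\<in>S. s \<noteq> \<one>\<^bsub>G\<^esub> \<and> s \<otimes>\<^bsub>G\<^esub> s = \<one>\<^bsub>G\<^esub>) \<and>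
     (\<forall>u. set u \<subseteq> S \<longrightarrow> word_eval G u = \<one>\<^bsub>G\<^esub> \<longrightarrow> cox_eq G S u [])"

definition cox_len :: "('w, 'b) monoid_scheme \<Rightarrow> 'w set \<Rightarrow> 'w \<Rightarrow> nat" where
  "cox_len G S w = (LEAST n. \<exists>u. length u = n \<and> set u \<subseteq> S \<and> word_eval G u = w)"

definition reflections :: "('w, 'b) monoid_scheme \<Rightarrow> 'w set \<Rightarrow> 'w set" where
  "reflections G S = {w \<otimes>\<^bsub>G\<^esub> s \<otimes>\<^bsub>G\<^esub> inv\<^bsub>G\<^esub> w | w s. w \<in> carrier G \<and> s \<in> S}"

definition parabolic :: "('w, 'b) monoid_scheme \<Rightarrow> 'w set \<Rightarrow> ('w, 'b) monoid_scheme" where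
  "parabolic G J = G\<lparr>carrier := generate G J\<rparr>"

definition min_reps :: "('w, 'b) monoid_scheme \<Rightarrow> 'w set \<Rightarrow> 'w set \<Rightarrow> 'w set" where
  "min_reps G S J = {w \<in> carrier G. \<forall>s\<in>J. cox_len G S (w \<otimes>\<^bsub>G\<^esub> s) > cox_len G S w}"

text \<open>Aut(W,S): automorphisms preserving S; represented as functions that are
  extensional on the carrier (so that equality of automorphisms is equality of
  functions).\<close>
definition autS :: "('w, 'b) monoid_scheme \<Rightarrow> 'w set \<Rightarrow> ('w \<Rightarrow> 'w) set" where
  "autS G S = {\<phi>. \<phi> \<in> iso G G \<and> \<phi> ` S = S \<and> \<phi> \<in> extensional (carrier G)}"

definition plus_carrier :: "('w, 'b) monoid_scheme \<Rightarrow> 'w set \<Rightarrow> ('w \<times> ('w \<Rightarrow> 'w)) set" where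
  "plus_carrier G S = carrier G \<times> autS G S"

definition plus_mult :: "('w, 'b) monoid_scheme \<Rightarrow> 'w \<times> ('w \<Rightarrow> 'w) \<Rightarrow> 'w \<times> ('w \<Rightarrow> 'w) \<Rightarrow> 'w \<times> ('w \<Rightarrow> 'w)" where
  "plus_mult G x y = (fst x \<otimes>\<^bsub>G\<^esub> snd x (fst y), restrict (snd x \<circ> snd y) (carrier G))"

definition plus_emb :: "('w, 'b) monoid_scheme \<Rightarrow> 'w \<Rightarrow> 'w \<times> ('w \<Rightarrow> 'w)" where
  "plus_emb G w = (w, restrict id (carrier G))"

definition plus_one :: "('w, 'b) monoid_scheme \<Rightarrow> 'w \<times> ('w \<Rightarrow> 'w)" where
  "plus_one G = plus_emb G \<one>\<^bsub>G\<^esub>"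

definition perfect_involutions :: "('w, 'b) monoid_scheme \<Rightarrow> 'w set \<Rightarrow> ('w \<times> ('w \<Rightarrow> 'w)) set" where
  "perfect_involutions G S =
     {z \<in> plus_carrier G S. plus_mult G z z = plus_one G \<and>
        (\<forall>t\<in>reflections G S.
           let x = plus_mult G z (plus_emb G t) in
           plus_mult G (plus_mult G x x) (plus_mult G x x) = plus_one G)}"

definition conj_act :: "('w, 'b) monoid_scheme \<Rightarrow> 'w \<Rightarrow> 'w \<times> ('w \<Rightarrow> 'w) \<Rightarrow> 'w \<times> ('w \<Rightarrow> 'w)" where
  "conj_act G v z = (v \<otimes>\<^bsub>G\<^esub> fst z \<otimes>\<^bsub>G\<^esub> inv\<^bsub>G\<^esub> (snd z v), snd z)"

definition KJ :: "('w, 'b) monoid_scheme \<Rightarrow> 'w set \<Rightarrow> 'w set \<Rightarrow> ('w \<times> ('w \<times> ('w \<Rightarrow> 'w))) set" where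
  "KJ G S J = min_reps G S J \<times> perfect_involutions (parabolic G J) J"

definition KJ_act :: "('w, 'b) monoid_scheme \<Rightarrow> 'w set \<Rightarrow> 'w set \<Rightarrow> 'w
    \<Rightarrow> 'w \<times> ('w \<times> ('w \<Rightarrow> 'w)) \<Rightarrow> 'w \<times> ('w \<times> ('w \<Rightarrow> 'w))" where
  "KJ_act G S J s \<tau> =
     (let w = fst \<tau>; z = snd \<tau> in
      if s \<otimes>\<^bsub>G\<^esub> w \<in> min_reps G S J then (s \<otimes>\<^bsub>G\<^esub> w, z)
      else (let t = inv\<^bsub>G\<^esub> w \<otimes>\<^bsub>G\<^esub> s \<otimes>\<^bsub>G\<^esub> w; WJ = parabolic G J in
            (w, plus_mult WJ (plus_mult WJ (plus_emb WJ t) z) (plus_emb WJ t))))"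

definition KJ_word_act :: "('w, 'b) monoid_scheme \<Rightarrow> 'w set \<Rightarrow> 'w set \<Rightarrow> 'w list
    \<Rightarrow> 'w \<times> ('w \<times> ('w \<Rightarrow> 'w)) \<Rightarrow> 'w \<times> ('w \<times> ('w \<Rightarrow> 'w))" where
  "KJ_word_act G S J u \<tau> = foldr (KJ_act G S J) u \<tau>"

text \<open>Same W-orbit: since W is generated by S, the W-orbit of \<tau> consists of
  the images of \<tau> under words in S.\<close>
definition same_W_orbit :: "('w, 'b) monoid_scheme \<Rightarrow> 'w set \<Rightarrow> 'w set
    \<Rightarrow> 'w \<times> ('w \<times> ('w \<Rightarrow> 'w)) \<Rightarrow> 'w \<times> ('w \<times> ('w \<Rightarrow> 'w)) \<Rightarrow> bool" where
  "same_W_orbit G S J \<tau> \<tau>' \<longleftrightarrow> (\<exists>u. set u \<subseteq> S \<and> KJ_word_act G S J u \<tau> = \<tau>')"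

end

theory Submission imports Defs begin

fun Rl :: "('w,'b) monoid_scheme \<Rightarrow> 'w list \<Rightarrow> 'w list" where
  "Rl G [] = []"
| "Rl G (s#u) = (inv\<^bsub>G\<^esub> (word_eval G u) \<otimes>\<^bsub>G\<^esub> s \<otimes>\<^bsub>G\<^esub> word_eval G u) # Rl G u"

lemma count_list_map_inj:
  "inj_on f (insert x (set xs)) \<Longrightarrow> count_list (map f xs) (f x) = count_list xs x"
  by (induction xs) (auto simp: inj_on_def)

locale coxc = group G for G (structure) +
  fixes S :: "'a set"
  assumes SC: "S \<subseteq> carrier G" and gen: "generate G S = carrier G"
  and invol: "\<And>s. s \<in> S \<Longrightarrow> s \<otimes> s = \<one>"
  and pres: "\<And>u. set u \<subseteq> S \<Longrightarrow> word_eval G u = \<one> \<Longrightarrow> cox_eq G S u []"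
  and fin: "finite (carrier G)"

context group begin
lemma we_Nil[simp]: "word_eval G [] = \<one>" by (simp add: word_eval_def)
lemma we_Cons[simp]: "word_eval G (x#u) = x \<otimes> word_eval G u" by (simp add: word_eval_def)
lemma we_closed[simp]: "set u \<subseteq> carrier G \<Longrightarrow> word_eval G u \<in> carrier G"
  by (induction u) auto
lemma we_append: "set u \<subseteq> carrier G \<Longrightarrow> set v \<subseteq> carrier G \<Longrightarrow>
   word_eval G (u @ v) = word_eval G u \<otimes> word_eval G v"
  by (induction u) (auto simp: m_assoc)
lemma inv_invol: "s \<in> carrier G \<Longrightarrow> s \<otimes> s = \<one> \<Longrightarrow> inv s = s"
  using inv_equality by blast

lemma words_gen:
  assumes "A \<subseteq> carrier G" "\<And>a. a \<in> A \<Longrightarrow> a \<otimes> a = \<one>" "x \<in> generate G A"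
  shows "\<exists>u. set u \<subseteq> A \<and> word_eval G u = x"
  using assms(3)
proof (induction rule: generate.induct)
  case one then show ?case by (intro exI[of _ "[]"]) auto
next
  case (incl h) then show ?case using assms(1) by (intro exI[of _ "[h]"]) auto
next
  case (inv h) then show ?case using assms(1,2) inv_invol[of h] by (intro exI[of _ "[h]"]) auto
next
  case (eng h1 h2)
  then obtain u1 u2 where "set u1 \<subseteq> A" "word_eval G u1 = h1" "set u2 \<subseteq> A" "word_eval G u2 = h2" by blast
  then show ?case using assms(1) we_append[of u1 u2] by (intro exI[of _ "u1 @ u2"]) auto
qed
end

context coxc begin

lemma S_car: "s \<in> S \<Longrightarrow> s \<in> carrier G" using SC by auto
lemma Sw_car: "set u \<subseteq> S \<Longrightarrow> set u \<subseteq> carrier G" using SC by auto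
lemma inv_S: "s \<in> S \<Longrightarrow> inv s = s" using inv_invol S_car invol by auto

abbreviation len where "len x \<equiv> cox_len G S x"

lemma len_le: "set u \<subseteq> S \<Longrightarrow> len (word_eval G u) \<le> length u"
  unfolding cox_len_def by (rule Least_le) auto

lemma has_word: "x \<in> carrier G \<Longrightarrow> \<exists>u. set u \<subseteq> S \<and> word_eval G u = x"
  using words_gen[OF SC invol] gen by auto

lemma reduced_ex: "x \<in> carrier G \<Longrightarrow> \<exists>u. set u \<subseteq> S \<and> word_eval G u = x \<and> length u = len x"
proof -
  assume "x \<in> carrier G"
  then obtain u where "set u \<subseteq> S" "word_eval G u = x" using has_word by blast
  then have "\<exists>n u. length u = n \<and> set u \<subseteq> S \<and> word_eval G u = x" by blast
  from LeastI_ex[OF this] show ?thesis unfolding cox_len_def by blast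
qed

lemma len_one: "len \<one> = 0"
  using len_le[of "[]"] by simp

lemma len_mult_S: "s \<in> S \<Longrightarrow> x \<in> carrier G \<Longrightarrow> len (s \<otimes> x) \<le> Suc (len x)"
proof -
  assume a: "s \<in> S" "x \<in> carrier G"
  then obtain u where "set u \<subseteq> S" "word_eval G u = x" "length u = len x" using reduced_ex by blast
  then show ?thesis using len_le[of "s#u"] a by auto
qed

lemma we_rev: "set u \<subseteq> S \<Longrightarrow> word_eval G (rev u) \<otimes> word_eval G u = \<one>"
proof (induction u)
  case Nil then show ?case by simp
next
  case (Cons s u)
  have c: "set u \<subseteq> carrier G" "s \<in> carrier G" using Cons.prems SC by auto
  have "word_eval G (rev (s#u)) \<otimes> word_eval G (s#u) = word_eval G (rev u) \<otimes> (s \<otimes> s) \<otimes> word_eval G u"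
    using c by (simp add: we_append m_assoc)
  also have "\<dots> = \<one>" using Cons c invol[of s] by simp
  finally show ?case .
qed

definition pis :: "'a \<Rightarrow> 'a \<times> bool \<Rightarrow> 'a \<times> bool" where
  "pis s p = (if fst p \<in> carrier G then (s \<otimes> fst p \<otimes> s, snd p \<noteq> (fst p = s)) else p)"

definition piw :: "'a list \<Rightarrow> 'a \<times> bool \<Rightarrow> 'a \<times> bool" where
  "piw u = foldr pis u"

lemma piw_Nil[simp]: "piw [] = id" by (simp add: piw_def)
lemma piw_Cons[simp]: "piw (s#u) = pis s \<circ> piw u" by (simp add: piw_def)
lemma piw_append: "piw (u @ v) = piw u \<circ> piw v" by (rule ext) (simp add: piw_def)

lemma Rl_car: "set u \<subseteq> S \<Longrightarrow> set (Rl G u) \<subseteq> carrier G"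
  by (induction u) (auto simp: S_car Sw_car)

lemma piw_formula:
  "set u \<subseteq> S \<Longrightarrow> y \<in> carrier G \<Longrightarrow>
   piw u (y,b) = (word_eval G u \<otimes> y \<otimes> inv (word_eval G u), b \<noteq> odd (count_list (Rl G u) y))"
proof (induction u arbitrary: b)
  case Nil then show ?case by simp
next
  case (Cons s u)
  let ?g = "word_eval G u"
  have c: "?g \<in> carrier G" "s \<in> carrier G" "set u \<subseteq> S" using Cons.prems Sw_car S_car by auto
  have e1: "s \<otimes> (?g \<otimes> y \<otimes> inv ?g) \<otimes> s = (s \<otimes> ?g) \<otimes> y \<otimes> inv (s \<otimes> ?g)"
    using c Cons.prems inv_S[of s] by (simp add: m_assoc inv_mult_group)
  have e2: "(?g \<otimes> y \<otimes> inv ?g = s) \<longleftrightarrow> (inv ?g \<otimes> s \<otimes> ?g = y)"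
  proof
    assume h: "?g \<otimes> y \<otimes> inv ?g = s"
    have "inv ?g \<otimes> s \<otimes> ?g = inv ?g \<otimes> (?g \<otimes> y \<otimes> inv ?g) \<otimes> ?g" using h by simp
    also have "\<dots> = y" using c Cons.prems by (simp add: m_assoc[symmetric])
      (simp add: m_assoc)
    finally show "inv ?g \<otimes> s \<otimes> ?g = y" .
  next
    assume h: "inv ?g \<otimes> s \<otimes> ?g = y"
    have "?g \<otimes> y \<otimes> inv ?g = ?g \<otimes> (inv ?g \<otimes> s \<otimes> ?g) \<otimes> inv ?g" using h by simp
    also have "\<dots> = s" using c by (simp add: m_assoc[symmetric])
      (simp add: m_assoc)
    finally show "?g \<otimes> y \<otimes> inv ?g = s" .
  qed
  let ?c = "count_list (Rl G u) y"
  have yc: "?g \<otimes> y \<otimes> inv ?g \<in> carrier G" using c Cons.prems by simp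
  have P: "piw (s#u) (y,b) = pis s (?g \<otimes> y \<otimes> inv ?g, b \<noteq> odd ?c)"
    using Cons.IH[OF c(3) Cons.prems(2)] by simp
  have Q: "pis s (?g \<otimes> y \<otimes> inv ?g, b \<noteq> odd ?c) =
     (s \<otimes> (?g \<otimes> y \<otimes> inv ?g) \<otimes> s, (b \<noteq> odd ?c) \<noteq> (?g \<otimes> y \<otimes> inv ?g = s))"
    using yc unfolding pis_def by (simp only: fst_conv snd_conv if_True)
  have cnt: "odd (count_list (Rl G (s#u)) y) = (odd ?c \<noteq> (inv ?g \<otimes> s \<otimes> ?g = y))" by simp
  show ?case unfolding P Q e1 e2 cnt by simp argo
qed

lemma piw_out: "y \<notin> carrier G \<Longrightarrow> piw u (y,b) = (y,b)"
  by (induction u) (auto simp: pis_def)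

lemma pis_pis: "s \<in> S \<Longrightarrow> pis s (pis s p) = p"
proof -
  assume s: "s \<in> S"
  obtain y b where p: "p = (y,b)" by force
  show ?thesis
  proof (cases "y \<in> carrier G")
    case True
    have e: "s \<otimes> (s \<otimes> y \<otimes> s) \<otimes> s = y" using s True invol[OF s] S_car[OF s]
      by (simp add: m_assoc[symmetric]) (simp add: m_assoc)
    have sc: "s \<in> carrier G" using S_car[OF s] .
    have e2: "(s \<otimes> y \<otimes> s = s) = (y = s)"
    proof
      assume h: "s \<otimes> y \<otimes> s = s"
      have "y = s \<otimes> (s \<otimes> y \<otimes> s) \<otimes> s" using e by simp
      also have "\<dots> = s \<otimes> s \<otimes> s" using h by simp
      also have "\<dots> = s" using invol[OF s] sc by simp
      finally show "y = s" .
    next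
      assume "y = s"
      then show "s \<otimes> y \<otimes> s = s" using invol[OF s] sc by simp
    qed
    show ?thesis using p True e e2 S_car[OF s] by (auto simp: pis_def)
  qed (auto simp: pis_def p)
qed

lemma piw_rev: "set u \<subseteq> S \<Longrightarrow> piw u (piw (rev u) p) = p"
  by (induction u arbitrary: p) (auto simp: piw_append pis_pis)

lemma pow_swap: "a \<in> carrier G \<Longrightarrow> b \<in> carrier G \<Longrightarrow> a \<otimes> (b \<otimes> a) [^] (n::nat) = (a \<otimes> b) [^] n \<otimes> a"
proof (induction n)
  case 0 then show ?case by simp
next
  case (Suc n)
  have "a \<otimes> (b \<otimes> a) [^] Suc n = (a \<otimes> (b \<otimes> a) [^] n) \<otimes> (b \<otimes> a)" using Suc.prems by (simp add: m_assoc)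
  also have "\<dots> = (a \<otimes> b) [^] n \<otimes> (a \<otimes> b) \<otimes> a" using Suc by (simp add: m_assoc)
  finally show ?case by simp
qed

lemma braid_word:
  assumes s: "s \<in> S" and t: "t \<in> S"
  shows "word_eval G (concat (replicate n [s,t])) = (s \<otimes> t) [^] n \<and>
         Rl G (concat (replicate n [s,t])) = rev (map (\<lambda>i. t \<otimes> (s \<otimes> t) [^] i) [0..<2*n])"
proof (induction n)
  case 0 then show ?case by simp
next
  case (Suc n)
  have cs: "s \<in> carrier G" "t \<in> carrier G" using s t S_car by auto
  let ?X = "concat (replicate n [s,t])"
  let ?g = "(s \<otimes> t) [^] n"
  let ?h = "\<lambda>i. t \<otimes> (s \<otimes> t) [^] i"
  have X: "concat (replicate (Suc n) [s,t]) = s # t # ?X" by simp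
  have gc: "?g \<in> carrier G" using cs by simp
  have ig: "inv ?g = (t \<otimes> s) [^] n"
    using cs inv_S[OF s] inv_S[OF t] nat_pow_inv[of "s \<otimes> t" n] by (simp add: inv_mult_group)
  have K: "inv ?g \<otimes> t = t \<otimes> ?g" using ig pow_swap[OF cs(2) cs(1), of n] by simp
  have ev: "word_eval G (concat (replicate (Suc n) [s,t])) = (s \<otimes> t) [^] Suc n"
  proof -
    have "word_eval G (concat (replicate (Suc n) [s,t])) = s \<otimes> (t \<otimes> ?g)" using Suc X by simp
    also have "\<dots> = (s \<otimes> t) \<otimes> ?g" using cs gc by (simp add: m_assoc)
    also have "\<dots> = (s \<otimes> t) [^] Suc n" using cs nat_pow_Suc2[of "s \<otimes> t" n] by simp
    finally show ?thesis .
  qed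
  have a1: "inv ?g \<otimes> t \<otimes> ?g = ?h (2*n)"
  proof -
    have "inv ?g \<otimes> t \<otimes> ?g = t \<otimes> (?g \<otimes> ?g)" using K cs gc by (simp add: m_assoc)
    also have "\<dots> = ?h (2*n)" using cs by (simp add: nat_pow_mult mult_2)
    finally show ?thesis .
  qed
  have a2: "inv (t \<otimes> ?g) \<otimes> s \<otimes> (t \<otimes> ?g) = ?h (2*n+1)"
  proof -
    have "inv (t \<otimes> ?g) = inv ?g \<otimes> t" using cs gc inv_S[OF t] by (simp add: inv_mult_group)
    then have "inv (t \<otimes> ?g) \<otimes> s \<otimes> (t \<otimes> ?g) = (inv ?g \<otimes> t) \<otimes> s \<otimes> (t \<otimes> ?g)" by simp
    also have "\<dots> = t \<otimes> (?g \<otimes> (s \<otimes> t)) \<otimes> ?g" using K cs gc by (simp add: m_assoc)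
    also have "\<dots> = t \<otimes> ((s \<otimes> t) [^] Suc n \<otimes> ?g)" using cs gc by (simp only: nat_pow_Suc) (simp add: m_assoc)
    also have "\<dots> = ?h (2*n+1)" using cs nat_pow_mult[of "s \<otimes> t" "Suc n" n] by (simp add: mult_2 del: nat_pow_Suc)
    finally show ?thesis .
  qed
  have IH1: "word_eval G ?X = ?g" and IH2: "Rl G ?X = rev (map ?h [0..<2*n])" using Suc.IH by auto
  have "Rl G (s # t # ?X) = (inv (t \<otimes> ?g) \<otimes> s \<otimes> (t \<otimes> ?g)) # (inv ?g \<otimes> t \<otimes> ?g) # Rl G ?X"
    by (simp only: Rl.simps we_Cons IH1)
  also have "\<dots> = ?h (2*n+1) # ?h (2*n) # Rl G ?X" by (simp only: a1 a2)
  also have "\<dots> = rev (map ?h [0..<2 * Suc n])"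
  proof -
    have "[0..<2 * Suc n] = [0..<2*n] @ [2*n, 2*n+1]" by simp
    then show ?thesis by (simp only: IH2 map_append rev_append) simp
  qed
  finally have R: "Rl G (s # t # ?X) = rev (map ?h [0..<2 * Suc n])" .
  show ?case using ev R unfolding X by (intro conjI) assumption+
qed

lemma braid_piw:
  assumes s: "s \<in> S" and t: "t \<in> S"
  shows "piw (concat (replicate (cox_m G s t) [s,t])) = id"
proof
  fix p :: "'a \<times> bool"
  obtain y b where p: "p = (y,b)" by force
  let ?m = "cox_m G s t"
  let ?h = "\<lambda>i. t \<otimes> (s \<otimes> t) [^] i"
  let ?X = "concat (replicate ?m [s,t])"
  have cs: "s \<in> carrier G" "t \<in> carrier G" using s t S_car by auto
  have pm: "(s \<otimes> t) [^] ?m = \<one>" unfolding cox_m_def using cs by simp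
  have BW: "word_eval G ?X = \<one>" "Rl G ?X = rev (map ?h [0..<2*?m])"
    using braid_word[OF s t, of ?m] pm by auto
  have per: "map ?h [?m..<?m+?m] = map ?h [0..<?m]"
  proof -
    have A: "[?m..<?m+?m] = map (\<lambda>i. i + ?m) [0..<?m]" by (simp add: map_add_upt)
    have H: "?h (i + ?m) = ?h i" for i
    proof -
      have "(s \<otimes> t) [^] (i + ?m) = (s \<otimes> t) [^] i \<otimes> (s \<otimes> t) [^] ?m"
        using cs by (simp only: nat_pow_mult m_closed)
      then show ?thesis using pm cs by simp
    qed
    have "map ?h [?m..<?m+?m] = map (\<lambda>i. ?h (i + ?m)) [0..<?m]" by (simp only: A map_map o_def)
    also have "\<dots> = map ?h [0..<?m]" by (rule map_cong[OF HOL.refl]) (rule H)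
    finally show ?thesis .
  qed
  have ev: "even (count_list (Rl G ?X) y)"
  proof -
    have E: "[0..<2*?m] = [0..<?m] @ [?m..<?m+?m]" by (subst mult_2) (rule upt_add_eq_append, simp)
    have "count_list (Rl G ?X) y = count_list (map ?h [0..<?m] @ map ?h [?m..<?m+?m]) y"
      by (simp only: BW(2) count_list_rev E map_append)
    also have "\<dots> = 2 * count_list (map ?h [0..<?m]) y" by (simp only: per count_list_append mult_2)
    finally have "count_list (Rl G ?X) y = 2 * count_list (map ?h [0..<?m]) y" .
    then show ?thesis by simp
  qed
  have X: "set ?X \<subseteq> S" using s t by auto
  show "piw ?X p = id p"
  proof (cases "y \<in> carrier G")
    case True
    then show ?thesis using piw_formula[OF X True, of b] BW ev p by simp
  next
    case False then show ?thesis using piw_out p by simp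
  qed
qed

lemma cox_eq_piw: "cox_eq G S u v \<Longrightarrow> (set u \<subseteq> S \<longleftrightarrow> set v \<subseteq> S) \<and> (set u \<subseteq> S \<longrightarrow> piw u = piw v)"
proof (induction rule: cox_eq.induct)
  case (ctx u v a b) then show ?case by (auto simp: piw_append)
next
  case (sq s) then show ?case by (auto simp: pis_pis)
next
  case (braid s t) then show ?case using braid_piw[of s t] by auto
qed auto

lemma piw_wd:
  assumes u: "set u \<subseteq> S" and v: "set v \<subseteq> S" and e: "word_eval G u = word_eval G v"
  shows "piw u = piw v"
proof
  fix p
  have rv: "set (rev v) \<subseteq> S" using v by simp
  have "word_eval G (rev v @ u) = word_eval G (rev v) \<otimes> word_eval G v"
    using e u v Sw_car by (simp add: we_append)
  also have "\<dots> = \<one>" using we_rev[OF v] .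
  finally have "cox_eq G S (rev v @ u) []" using pres u rv by auto
  then have "piw (rev v @ u) = piw []" using cox_eq_piw u rv by auto
  then have "piw (rev v) (piw u p) = p" by (metis comp_apply id_apply piw_Nil piw_append)
  then show "piw u p = piw v p" using piw_rev[OF v, of "piw u p"] by simp
qed

definition Q :: "'a list \<Rightarrow> 'a \<Rightarrow> bool" where "Q u y = odd (count_list (Rl G u) y)"

lemma Q_wd: "set u \<subseteq> S \<Longrightarrow> set v \<subseteq> S \<Longrightarrow> word_eval G u = word_eval G v \<Longrightarrow> y \<in> carrier G \<Longrightarrow> Q u y = Q v y"
  using piw_wd[of u v] piw_formula[of u y False] piw_formula[of v y False] unfolding Q_def by auto

lemma deletion:
  "set u \<subseteq> S \<Longrightarrow> y \<in> set (Rl G u) \<Longrightarrow> \<exists>u'. set u' \<subseteq> S \<and> word_eval G u' = word_eval G u \<otimes> y \<and> length u' < length u"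
proof (induction u)
  case Nil then show ?case by simp
next
  case (Cons s u)
  let ?g = "word_eval G u"
  have c: "?g \<in> carrier G" "s \<in> carrier G" "set u \<subseteq> S" "s \<in> S" using Cons.prems Sw_car S_car by auto
  from Cons.prems(2) have "y = inv ?g \<otimes> s \<otimes> ?g \<or> y \<in> set (Rl G u)" by auto
  then show ?case
  proof
    assume y: "y = inv ?g \<otimes> s \<otimes> ?g"
    have ic: "inv ?g \<in> carrier G" using c by simp
    have "word_eval G (s#u) \<otimes> y = s \<otimes> (?g \<otimes> inv ?g) \<otimes> (s \<otimes> ?g)" using y c ic
      by (simp only: we_Cons m_assoc m_closed)
    also have "\<dots> = s \<otimes> (s \<otimes> ?g)" using c by simp
    also have "\<dots> = ?g" using c invol[OF c(4)] by (simp add: m_assoc[symmetric])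
    finally show ?thesis using c by (intro exI[of _ u]) auto
  next
    assume "y \<in> set (Rl G u)"
    then obtain u' where u': "set u' \<subseteq> S" "word_eval G u' = ?g \<otimes> y" "length u' < length u" using Cons c by blast
    have yc: "y \<in> carrier G" using Rl_car[OF c(3)] \<open>y \<in> set (Rl G u)\<close> by auto
    show ?thesis using u' c yc by (intro exI[of _ "s#u'"]) (auto simp: m_assoc)
  qed
qed

lemma deletion_len: "set u \<subseteq> S \<Longrightarrow> Q u y \<Longrightarrow> len (word_eval G u \<otimes> y) < length u"
proof -
  assume a: "set u \<subseteq> S" "Q u y"
  then have "y \<in> set (Rl G u)" unfolding Q_def using count_notin by fastforce
  then obtain u' where "set u' \<subseteq> S" "word_eval G u' = word_eval G u \<otimes> y" "length u' < length u"
    using deletion a by blast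
  then show ?thesis using len_le[of u'] by auto
qed

lemma Rl_snoc: "set u \<subseteq> S \<Longrightarrow> r \<in> S \<Longrightarrow> Rl G (u @ [r]) = map (\<lambda>y. r \<otimes> y \<otimes> r) (Rl G u) @ [r]"
proof (induction u)
  case Nil then show ?case using inv_S[of r] S_car[of r] invol[of r] by simp
next
  case (Cons s u)
  let ?g = "word_eval G u"
  have c: "?g \<in> carrier G" "s \<in> carrier G" "r \<in> carrier G" "set u \<subseteq> S" using Cons.prems Sw_car S_car by auto
  have e: "word_eval G (u @ [r]) = ?g \<otimes> r" using c Sw_car[OF c(4)] we_append[of u "[r]"] by simp
  have "inv (?g \<otimes> r) \<otimes> s \<otimes> (?g \<otimes> r) = r \<otimes> (inv ?g \<otimes> s \<otimes> ?g) \<otimes> r"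
    using c inv_S[OF Cons.prems(2)] by (simp add: inv_mult_group m_assoc)
  then show ?case using Cons e by simp
qed

lemma Qneg:
  assumes u: "set u \<subseteq> S" and r: "r \<in> S" and nq: "\<not> Q u r"
  shows "len (word_eval G u) < len (word_eval G u \<otimes> r)"
proof -
  let ?g = "word_eval G u"
  have c: "?g \<in> carrier G" "r \<in> carrier G" using u r Sw_car S_car by auto
  obtain u' where u': "set u' \<subseteq> S" "word_eval G u' = ?g \<otimes> r" "length u' = len (?g \<otimes> r)"
    using reduced_ex[of "?g \<otimes> r"] c by auto
  have u'r: "set (u' @ [r]) \<subseteq> S" using u' r by auto
  have ev: "word_eval G (u' @ [r]) = ?g" using u' c invol[OF r] Sw_car[OF u'(1)] by (simp add: we_append m_assoc)
  have inj: "inj_on (\<lambda>y. r \<otimes> y \<otimes> r) (insert r (set (Rl G u')))"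
  proof (rule inj_onI)
    fix x y assume x: "x \<in> insert r (set (Rl G u'))" and y: "y \<in> insert r (set (Rl G u'))"
      and e: "r \<otimes> x \<otimes> r = r \<otimes> y \<otimes> r"
    have xc: "x \<in> carrier G" "y \<in> carrier G" using x y Rl_car[OF u'(1)] c by auto
    have "x = r \<otimes> (r \<otimes> x \<otimes> r) \<otimes> r" using xc c invol[OF r] by (simp add: m_assoc[symmetric])
      (simp add: m_assoc)
    also have "\<dots> = r \<otimes> (r \<otimes> y \<otimes> r) \<otimes> r" using e by simp
    also have "\<dots> = y" using xc c invol[OF r] by (simp add: m_assoc[symmetric])
      (simp add: m_assoc)
    finally show "x = y" .
  qed
  have rr: "r \<otimes> r \<otimes> r = r" using invol[OF r] c by simp
  have "count_list (Rl G (u' @ [r])) r = count_list (map (\<lambda>y. r \<otimes> y \<otimes> r) (Rl G u')) (r \<otimes> r \<otimes> r) + 1"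
    using Rl_snoc[OF u'(1) r] rr by simp
  also have "\<dots> = count_list (Rl G u') r + 1" using count_list_map_inj[OF inj] by simp
  finally have "Q (u' @ [r]) r = (\<not> Q u' r)" unfolding Q_def by simp
  moreover have "Q (u' @ [r]) r = Q u r" using Q_wd[OF u'r u, of r] ev c by simp
  ultimately have "Q u' r" using nq by simp
  from deletion_len[OF u'(1) this] have "len (?g \<otimes> r \<otimes> r) < len (?g \<otimes> r)" using u' by simp
  then show ?thesis using c invol[OF r] by (simp add: m_assoc)
qed

lemma deodhar:
  assumes x: "x \<in> carrier G" and s: "s \<in> S" and r: "r \<in> S"
    and up: "len x < len (x \<otimes> r)" and nup: "\<not> len (s \<otimes> x) < len (s \<otimes> x \<otimes> r)"
  shows "inv x \<otimes> s \<otimes> x = r"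
proof -
  obtain v where v: "set v \<subseteq> S" "word_eval G v = x" "length v = len x" using reduced_ex[OF x] by blast
  have sv: "set (s#v) \<subseteq> S" using v s by auto
  have "Q (s#v) r" using Qneg[OF sv r] nup v by auto
  moreover have "\<not> Q v r"
  proof
    assume "Q v r"
    from deletion_len[OF v(1) this] v up show False by simp
  qed
  ultimately show ?thesis unfolding Q_def using v by (auto split: if_splits)
qed

context
  fixes J assumes JS: "J \<subseteq> S"
begin

abbreviation "H \<equiv> generate G J"
abbreviation "WJ \<equiv> parabolic G J"

lemma J_car: "J \<subseteq> carrier G" using JS SC by auto
lemma H_sub: "subgroup H G" using generate_is_subgroup[OF J_car] .
lemma H_car: "x \<in> H \<Longrightarrow> x \<in> carrier G" using subgroup.mem_carrier[OF H_sub] .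
lemma WJ_carrier[simp]: "carrier WJ = H" by (simp add: parabolic_def)
lemma WJ_mult[simp]: "x \<otimes>\<^bsub>WJ\<^esub> y = x \<otimes> y" by (simp add: parabolic_def)
lemma WJ_one[simp]: "\<one>\<^bsub>WJ\<^esub> = \<one>" by (simp add: parabolic_def)
lemma WJ_inv[simp]: "x \<in> H \<Longrightarrow> inv\<^bsub>WJ\<^esub> x = inv x"
  unfolding parabolic_def using m_inv_consistent[OF H_sub] by simp
lemma WJ_group: "group WJ" unfolding parabolic_def using subgroup_imp_group[OF H_sub] .
lemma J_H: "t \<in> J \<Longrightarrow> t \<in> H" by (rule generate.incl)

lemma aut_facts:
  assumes "\<theta> \<in> autS WJ J"
  shows "\<And>x. x \<in> H \<Longrightarrow> \<theta> x \<in> H" "\<And>x y. x \<in> H \<Longrightarrow> y \<in> H \<Longrightarrow> \<theta> (x \<otimes> y) = \<theta> x \<otimes> \<theta> y"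
    "\<theta> \<one> = \<one>" "\<And>t. t \<in> J \<Longrightarrow> \<theta> t \<in> J" "\<theta> \<in> extensional H"
proof -
  have h: "\<theta> \<in> hom WJ WJ" and e: "\<theta> \<in> extensional H" and j: "\<theta> ` J = J"
    using assms unfolding autS_def iso_def by auto
  show "\<And>x. x \<in> H \<Longrightarrow> \<theta> x \<in> H" using hom_in_carrier[OF h] by simp
  show "\<And>x y. x \<in> H \<Longrightarrow> y \<in> H \<Longrightarrow> \<theta> (x \<otimes> y) = \<theta> x \<otimes> \<theta> y" using hom_mult[OF h] by simp
  have "group_hom WJ WJ \<theta>" using h WJ_group by (simp add: group_hom_def group_hom_axioms_def)
  then show "\<theta> \<one> = \<one>" using group_hom.hom_one by fastforce
  show "\<And>t. t \<in> J \<Longrightarrow> \<theta> t \<in> J" using j by auto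
  show "\<theta> \<in> extensional H" using e .
qed

lemma plus_conj:
  assumes t: "t \<in> J" and a: "a \<in> H" and th: "\<theta> \<in> autS WJ J"
  shows "plus_mult WJ (plus_mult WJ (plus_emb WJ t) (a,\<theta>)) (plus_emb WJ t) = conj_act WJ t (a,\<theta>)"
proof -
  note F = aut_facts[OF th]
  have r1: "restrict (restrict id H \<circ> \<theta>) H = \<theta>"
    using F(1) F(5) by (auto simp: fun_eq_iff extensional_def)
  have r2: "restrict (\<theta> \<circ> restrict id H) H = \<theta>"
    using F(5) by (auto simp: fun_eq_iff extensional_def)
  have tS: "t \<in> S" using t JS by auto
  have tt: "\<theta> t \<in> J" using F(4) t .
  have itt: "inv (\<theta> t) = \<theta> t" using inv_S tt JS by auto
  show ?thesis
    using a t r1 r2 itt J_H[OF tt] J_H[OF t]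
    by (simp add: plus_mult_def plus_emb_def conj_act_def)
qed

lemma conj_comp:
  assumes v1: "v1 \<in> H" and v2: "v2 \<in> H" and a: "a \<in> H" and th: "\<theta> \<in> autS WJ J"
  shows "conj_act WJ v1 (conj_act WJ v2 (a,\<theta>)) = conj_act WJ (v1 \<otimes> v2) (a,\<theta>)"
proof -
  note F = aut_facts[OF th]
  have c: "v1 \<in> carrier G" "v2 \<in> carrier G" "a \<in> carrier G" "\<theta> v1 \<in> carrier G" "\<theta> v2 \<in> carrier G"
    using v1 v2 a F(1) H_car by auto
  have m: "v1 \<otimes> v2 \<in> H" using v1 v2 subgroup.m_closed[OF H_sub] by auto
  have "v1 \<otimes> (v2 \<otimes> a \<otimes> inv (\<theta> v2)) \<otimes> inv (\<theta> v1) = v1 \<otimes> v2 \<otimes> a \<otimes> inv (\<theta> v1 \<otimes> \<theta> v2)"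
    using c by (simp add: m_assoc inv_mult_group)
  moreover have "\<theta> v1 \<otimes> \<theta> v2 \<in> H" using subgroup.m_closed[OF H_sub F(1)[OF v1] F(1)[OF v2]] .
  ultimately show ?thesis using v1 v2 m F(1) F(2) by (simp add: conj_act_def)
qed

lemma conj_one: "a \<in> H \<Longrightarrow> \<theta> \<in> autS WJ J \<Longrightarrow> conj_act WJ \<one> (a,\<theta>) = (a,\<theta>)"
  using aut_facts(3)[of \<theta>] H_car[of a] subgroup.one_closed[OF H_sub] by (simp add: conj_act_def)

lemma conj_closed: "v \<in> H \<Longrightarrow> a \<in> H \<Longrightarrow> \<theta> \<in> autS WJ J \<Longrightarrow> \<exists>b\<in>H. conj_act WJ v (a,\<theta>) = (b,\<theta>)"
  using aut_facts(1)[of \<theta> v] subgroup.m_closed[OF H_sub] subgroup.m_inv_closed[OF H_sub]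
  by (simp add: conj_act_def)

lemma KJ_act_eq:
  "KJ_act G S J s (x,y) = (if s \<otimes> x \<in> min_reps G S J then (s \<otimes> x, y)
     else (x, plus_mult WJ (plus_mult WJ (plus_emb WJ (inv x \<otimes> s \<otimes> x)) y) (plus_emb WJ (inv x \<otimes> s \<otimes> x))))"
  by (simp add: KJ_act_def Let_def)

lemma suffix_red:
  assumes s: "s \<in> S" and u: "set u \<subseteq> S" and l: "length (s#u) = len (word_eval G (s#u))"
    and m: "word_eval G (s#u) \<in> min_reps G S J"
  shows "length u = len (word_eval G u) \<and> word_eval G u \<in> min_reps G S J"
proof -
  let ?g = "word_eval G u"
  have gc: "?g \<in> carrier G" using u Sw_car by simp
  have sc: "s \<in> carrier G" using s S_car by simp
  have l1: "len ?g \<le> length u" using len_le[OF u] .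
  have l2: "len (s \<otimes> ?g) \<le> Suc (len ?g)" using len_mult_S[OF s gc] .
  have L: "length u = len ?g" using l l1 l2 by simp
  have "\<forall>r\<in>J. len ?g < len (?g \<otimes> r)"
  proof
    fix r assume r: "r \<in> J"
    have rc: "r \<in> carrier G" using r J_car by auto
    show "len ?g < len (?g \<otimes> r)"
    proof (rule ccontr)
      assume "\<not> len ?g < len (?g \<otimes> r)"
      then have "len (?g \<otimes> r) \<le> len ?g" by simp
      moreover have "len (s \<otimes> (?g \<otimes> r)) \<le> Suc (len (?g \<otimes> r))" using len_mult_S[OF s] gc rc by simp
      moreover have "len (s \<otimes> ?g) < len (s \<otimes> ?g \<otimes> r)" using m r unfolding min_reps_def by simp
      ultimately show False using l L gc rc sc by (simp add: m_assoc)
    qed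
  qed
  then show ?thesis using L gc unfolding min_reps_def by simp
qed

lemma go_down:
  "set u \<subseteq> S \<Longrightarrow> length u = len (word_eval G u) \<Longrightarrow> word_eval G u \<in> min_reps G S J \<Longrightarrow>
   foldr (KJ_act G S J) (rev u) (word_eval G u, y) = (\<one>, y)"
proof (induction u)
  case Nil then show ?case by simp
next
  case (Cons s u)
  have s: "s \<in> S" and u: "set u \<subseteq> S" using Cons.prems by auto
  note R = suffix_red[OF s u Cons.prems(2,3)]
  have e: "s \<otimes> (s \<otimes> word_eval G u) = word_eval G u"
    using invol[OF s] S_car[OF s] Sw_car[OF u] by (simp add: m_assoc[symmetric])
  have "KJ_act G S J s (word_eval G (s#u), y) = (word_eval G u, y)"
    using R e by (simp add: KJ_act_eq)
  then show ?case using Cons.IH[OF u] R by simp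
qed

lemma go_up:
  "set u \<subseteq> S \<Longrightarrow> length u = len (word_eval G u) \<Longrightarrow> word_eval G u \<in> min_reps G S J \<Longrightarrow>
   foldr (KJ_act G S J) u (\<one>, y) = (word_eval G u, y)"
proof (induction u)
  case Nil then show ?case by simp
next
  case (Cons s u)
  have s: "s \<in> S" and u: "set u \<subseteq> S" using Cons.prems by auto
  note R = suffix_red[OF s u Cons.prems(2,3)]
  show ?case using Cons.IH[OF u] R Cons.prems(3) by (simp add: KJ_act_eq)
qed

lemma middle:
  "set c \<subseteq> J \<Longrightarrow> a \<in> H \<Longrightarrow> \<theta> \<in> autS WJ J \<Longrightarrow>
   foldr (KJ_act G S J) c (\<one>, (a,\<theta>)) = (\<one>, conj_act WJ (word_eval G c) (a,\<theta>))"
proof (induction c)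
  case Nil then show ?case using conj_one by simp
next
  case (Cons s c)
  have s: "s \<in> J" and c: "set c \<subseteq> J" using Cons.prems by auto
  have sc: "s \<in> carrier G" using s J_car by auto
  have gH: "word_eval G c \<in> H"
  proof -
    have "\<And>x. x \<in> set c \<Longrightarrow> x \<in> H" using c J_H by auto
    then show ?thesis by (induction c) (auto intro: generate.one generate.eng)
  qed
  obtain b where b: "b \<in> H" "conj_act WJ (word_eval G c) (a,\<theta>) = (b,\<theta>)"
    using conj_closed[OF gH Cons.prems(2,3)] by blast
  have nm: "s \<notin> min_reps G S J"
  proof
    assume "s \<in> min_reps G S J"
    then have "len s < len (s \<otimes> s)" using s unfolding min_reps_def by blast
    then show False using invol[of s] s JS len_one by auto
  qed
  have "KJ_act G S J s (\<one>, (b,\<theta>)) = (\<one>, conj_act WJ s (b,\<theta>))"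
    using nm sc plus_conj[OF s b(1) Cons.prems(3)] by (simp add: KJ_act_eq)
  also have "\<dots> = (\<one>, conj_act WJ (word_eval G (s#c)) (a,\<theta>))"
    using conj_comp[OF J_H[OF s] gH Cons.prems(2,3)] b(2) by simp
  finally show ?case using Cons.IH[OF c Cons.prems(2,3)] b(2) by simp
qed

lemma forward:
  "set u \<subseteq> S \<Longrightarrow> x0 \<in> min_reps G S J \<Longrightarrow> a \<in> H \<Longrightarrow> \<theta> \<in> autS WJ J \<Longrightarrow>
   fst (foldr (KJ_act G S J) u (x0,(a,\<theta>))) \<in> min_reps G S J \<and>
   (\<exists>v\<in>H. snd (foldr (KJ_act G S J) u (x0,(a,\<theta>))) = conj_act WJ v (a,\<theta>))"
proof (induction u)
  case Nil then show ?case using conj_one subgroup.one_closed[OF H_sub] by force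
next
  case (Cons s u)
  have s: "s \<in> S" and u: "set u \<subseteq> S" using Cons.prems by auto
  obtain x y where xy: "foldr (KJ_act G S J) u (x0,(a,\<theta>)) = (x,y)" by (metis surjective_pairing)
  from Cons.IH[OF u Cons.prems(2-4)] xy obtain v where
    x: "x \<in> min_reps G S J" and v: "v \<in> H" "y = conj_act WJ v (a,\<theta>)" by auto
  obtain b where b: "b \<in> H" "y = (b,\<theta>)" using conj_closed[OF v(1) Cons.prems(3,4)] v(2) by auto
  have xc: "x \<in> carrier G" using x unfolding min_reps_def by auto
  show ?case
  proof (cases "s \<otimes> x \<in> min_reps G S J")
    case True then show ?thesis using xy x v by (auto simp: KJ_act_eq)
  next
    case False
    have sxc: "s \<otimes> x \<in> carrier G" using xc S_car[OF s] by simp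
    then obtain r where r: "r \<in> J" "\<not> len (s \<otimes> x) < len (s \<otimes> x \<otimes> r)"
      using False unfolding min_reps_def by auto
    have up: "len x < len (x \<otimes> r)" using x r(1) unfolding min_reps_def by auto
    have d: "inv x \<otimes> s \<otimes> x = r" using deodhar[OF xc s _ up r(2)] r(1) JS by auto
    have "KJ_act G S J s (x,y) = (x, conj_act WJ r (b,\<theta>))"
      using False d plus_conj[OF r(1) b(1) Cons.prems(4)] b(2) by (simp add: KJ_act_eq)
    also have "\<dots> = (x, conj_act WJ (r \<otimes> v) (a,\<theta>))"
      using conj_comp[OF J_H[OF r(1)] v(1) Cons.prems(3,4)] v(2) b(2) by simp
    finally show ?thesis using xy x subgroup.m_closed[OF H_sub J_H[OF r(1)] v(1)] by auto
  qed
qed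

end

end

theorem mainTheorem10:
  fixes W :: "('w, 'b) monoid_scheme" and S J :: "'w set"
    and w w' :: 'w and z z' :: "'w \<times> ('w \<Rightarrow> 'w)"
  assumes "coxeter_system W S" and "finite (carrier W)" and "J \<subseteq> S"
    and "(w, z) \<in> KJ W S J" and "(w', z') \<in> KJ W S J"
  shows "same_W_orbit W S J (w, z) (w', z') \<longleftrightarrow>
         (\<exists>v \<in> carrier (parabolic W J). z' = conj_act (parabolic W J) v z)"
proof -
  have C: "coxc W S" using assms(1,2) unfolding coxeter_system_def coxc_def coxc_axioms_def by auto
  interpret coxc W S by (rule C)
  note JS = assms(3)
  have w: "w \<in> min_reps W S J" and w': "w' \<in> min_reps W S J"
    using assms(4,5) unfolding KJ_def by auto
  have "z \<in> plus_carrier (parabolic W J) J" using assms(4) unfolding KJ_def perfect_involutions_def by auto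
  then obtain a \<theta> where z: "z = (a,\<theta>)" "a \<in> generate W J" "\<theta> \<in> autS (parabolic W J) J"
    unfolding plus_carrier_def using WJ_carrier[OF JS] by auto
  show ?thesis
  proof
    assume "same_W_orbit W S J (w, z) (w', z')"
    then obtain u where u: "set u \<subseteq> S" "foldr (KJ_act W S J) u (w,z) = (w',z')"
      unfolding same_W_orbit_def KJ_word_act_def by auto
    from forward[OF JS u(1) w z(2,3)] u(2) z(1) show "\<exists>v \<in> carrier (parabolic W J). z' = conj_act (parabolic W J) v z"
      using WJ_carrier[OF JS] by auto
  next
    assume "\<exists>v \<in> carrier (parabolic W J). z' = conj_act (parabolic W J) v z"
    then obtain v where v: "v \<in> generate W J" "z' = conj_act (parabolic W J) v z"
      using WJ_carrier[OF JS] by auto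
    obtain c where c: "set c \<subseteq> J" "word_eval W c = v"
      using words_gen[OF J_car[OF JS] _ v(1)] invol JS by blast
    have wc: "w \<in> carrier W" "w' \<in> carrier W" using w w' unfolding min_reps_def by auto
    obtain u where u: "set u \<subseteq> S" "word_eval W u = w" "length u = len w" using reduced_ex[OF wc(1)] by blast
    obtain u' where u': "set u' \<subseteq> S" "word_eval W u' = w'" "length u' = len w'" using reduced_ex[OF wc(2)] by blast
    have "foldr (KJ_act W S J) (rev u) (w, z) = (\<one>\<^bsub>W\<^esub>, z)"
      using go_down[OF JS u(1)] u w by simp
    moreover have "foldr (KJ_act W S J) c (\<one>\<^bsub>W\<^esub>, z) = (\<one>\<^bsub>W\<^esub>, z')"
      using middle[OF JS c(1) z(2,3)] z(1) v(2) c(2) by simp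
    moreover have "foldr (KJ_act W S J) u' (\<one>\<^bsub>W\<^esub>, z') = (w', z')"
      using go_up[OF JS u'(1)] u' w' by simp
    ultimately have "foldr (KJ_act W S J) (u' @ c @ rev u) (w, z) = (w', z')" by simp
    moreover have "set (u' @ c @ rev u) \<subseteq> S" using u u' c JS by auto
    ultimately show "same_W_orbit W S J (w, z) (w', z')"
      unfolding same_W_orbit_def KJ_word_act_def by blast
  qed
qed

end
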